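(* Let $\gamma_1,\dots,\gamma_T$ be real numbers with $0<\gamma_k<1$ for all $1\le k\le T$, and let $\gamma_{max}^k=\max\{\gamma_1,\dots,\gamma_k\}$. Let $\alpha>0$, $0<\beta<1/\gamma_{max}^T$ and $i\in\{1,2,\dots\}$. Define $$\Psi(k)=\left[(1-\gamma_{max}^k\beta)^{k-1}+\dots+(1-\gamma_{max}^k\beta)+1\right](\gamma_{max}^k)^i\alpha.$$ Then for every $k$ with $1\le k\le T-1$, $$(1-\gamma_{k+1}\beta)\Psi(k)+(\gamma_{k+1})^i\alpha\le\Psi(k+1).$$ *)

theory Defs
  imports Complex_Main
begin

definition gmax :: "(nat \<Rightarrow> real) \<Rightarrow> nat \<Rightarrow> real" where
  "gmax gamma k = Max (gamma ` {1..k})"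

definition Psi :: "(nat \<Rightarrow> real) \<Rightarrow> real \<Rightarrow> real \<Rightarrow> nat \<Rightarrow> nat \<Rightarrow> real" where
  "Psi gamma alpha beta i k =
     (\<Sum>j<k. (1 - gmax gamma k * beta) ^ j) * (gmax gamma k) ^ i * alpha"

end

theory Submission
  imports Defs
begin

lemma geo_id: "(b::real) * x * (\<Sum>j<k. (1 - x * b) ^ j) = 1 - (1 - x * b) ^ (k::nat)"
proof (induction k)
  case (Suc k)
  have "b * x * (\<Sum>j<Suc k. (1 - x * b) ^ j) = b * x * (1 - x * b) ^ k + b * x * (\<Sum>j<k. (1 - x * b) ^ j)"
    by (simp add: ring_distribs)
  also have "\<dots> = b * x * (1 - x * b) ^ k + (1 - (1 - x * b) ^ k)" using Suc by simp
  also have "\<dots> = 1 - (1 - x * b) ^ Suc k" by (simp add: algebra_simps)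
  finally show ?case .
qed simp

lemma gmax_Suc: "1 \<le> k \<Longrightarrow> gmax gamma (Suc k) = max (gamma (Suc k)) (gmax gamma k)"
proof -
  assume "1 \<le> k"
  have "{1..Suc k} = insert (Suc k) {1..k}" by auto
  thus ?thesis using \<open>1 \<le> k\<close> unfolding gmax_def by (simp add: Max_insert)
qed

lemma gmax_ge: "j \<in> {1..k} \<Longrightarrow> gamma j \<le> gmax gamma k"
  unfolding gmax_def by auto

lemma gmax_in: "1 \<le> k \<Longrightarrow> gmax gamma k \<in> gamma ` {1..k}"
  unfolding gmax_def by (intro Max_in) auto

theorem lemma13:
  fixes gamma :: "nat \<Rightarrow> real" and alpha beta :: real and i T k :: nat
  assumes gamma_range: "\<And>j. 1 \<le> j \<Longrightarrow> j \<le> T \<Longrightarrow> 0 < gamma j \<and> gamma j < 1"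
    and alpha_pos: "alpha > 0"
    and beta_pos: "0 < beta" and beta_bound: "beta < 1 / gmax gamma T"
    and i_pos: "i \<ge> 1"
    and k_range: "1 \<le> k" "k \<le> T - 1"
  shows "(1 - gamma (k + 1) * beta) * Psi gamma alpha beta i k + (gamma (k + 1)) ^ i * alpha
           \<le> Psi gamma alpha beta i (k + 1)"
proof -
  define g where "g = gmax gamma k"
  define c where "c = gamma (k+1)"
  define G where "G = gmax gamma T"
  obtain m where m: "i = Suc m" using i_pos by (cases i) auto
  have kT: "k + 1 \<le> T" using k_range by auto
  have cpos: "0 < c" and cG: "c \<le> G" using gamma_range[of "k+1"] kT gmax_ge[of "k+1" T gamma]
    by (auto simp: c_def G_def)
  obtain j where j: "j \<in> {1..k}" "g = gamma j" using gmax_in[OF k_range(1), of gamma] unfolding g_def by blast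
  have gpos: "0 < g" using gamma_range[of j] j kT by auto
  have gG: "g \<le> G" using gmax_ge[of j T gamma] j kT by (auto simp: G_def)
  have Gpos: "0 < G" using gpos gG by auto
  have bG: "beta * G < 1" using beta_bound Gpos by (simp add: field_simps G_def)
  have cb: "c * beta < 1" using cG bG beta_pos
    by (smt (verit, best) mult.commute mult_right_mono)
  have gb: "g * beta < 1" using gG bG beta_pos
    by (smt (verit, best) mult.commute mult_right_mono)
  have g1: "gmax gamma (k+1) = max c g" using gmax_Suc[OF k_range(1)] by (simp add: c_def g_def)
  define S where "S x = (\<Sum>j<k. (1 - x * beta) ^ j)" for x
  have PsiK: "Psi gamma alpha beta i k = S g * g^i * alpha" by (simp add: Psi_def S_def g_def)
  have PsiK1: "Psi gamma alpha beta i (k+1) = ((1 - max c g * beta) * S (max c g) + 1) * (max c g)^i * alpha"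
    unfolding Psi_def g1 S_def by (simp add: sum.lessThan_Suc_shift sum_distrib_left power_Suc
        del: sum.lessThan_Suc)
  have Sid: "beta * x * S x = 1 - (1 - x * beta) ^ k" for x unfolding S_def by (rule geo_id)
  show ?thesis
  proof (cases "c \<le> g")
    case True
    have mx: "max c g = g" using True by auto
    have p0: "0 \<le> (1 - g * beta) ^ k" using gb by simp
    have h1: "beta * g * S g \<le> 1" using Sid[of g] p0 by linarith
    have cm: "c ^ m \<le> g ^ m" using True cpos by (intro power_mono) auto
    have h2: "c ^ i \<le> c * g ^ m" using cm cpos by (simp add: m mult_left_mono)
    have gm: "0 \<le> g ^ m" using gpos by simp
    have "(g - c) * beta * S g * g ^ i = (g - c) * g ^ m * (beta * g * S g)"
      by (simp add: m algebra_simps)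
    also have "\<dots> \<le> (g - c) * g ^ m" using h1 True gm
      by (simp add: mult_left_le)
    also have "\<dots> \<le> g ^ i - c ^ i" using h2 by (simp add: m algebra_simps)
    finally have key: "(g - c) * beta * S g * g ^ i \<le> g ^ i - c ^ i" .
    have "(1 - c * beta) * (S g * g ^ i) + c ^ i \<le> (1 - g * beta) * (S g * g ^ i) + g ^ i"
      using key by (simp add: algebra_simps)
    hence "((1 - c * beta) * (S g * g ^ i) + c ^ i) * alpha \<le> ((1 - g * beta) * (S g * g ^ i) + g ^ i) * alpha"
      using alpha_pos by (simp add: mult_right_mono)
    thus ?thesis unfolding PsiK PsiK1 mx c_def[symmetric] by (simp add: algebra_simps)
  next
    case False
    have mx: "max c g = c" using False by auto
    have pw: "(1 - c * beta) ^ k \<le> (1 - g * beta) ^ k"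
      using False cb beta_pos by (intro power_mono) (auto simp: mult_right_mono)
    have e1: "S g * g ^ i = g ^ m * (1 - (1 - g * beta) ^ k) / beta"
    proof -
      have "S g * g ^ i = g ^ m * (beta * g * S g) / beta" using beta_pos by (simp add: m field_simps)
      thus ?thesis using Sid[of g] by simp
    qed
    have e2: "S c * c ^ i = c ^ m * (1 - (1 - c * beta) ^ k) / beta"
    proof -
      have "S c * c ^ i = c ^ m * (beta * c * S c) / beta" using beta_pos by (simp add: m field_simps)
      thus ?thesis using Sid[of c] by simp
    qed
    have gmc: "g ^ m \<le> c ^ m" using False gpos by (intro power_mono) auto
    have a0: "0 \<le> 1 - (1 - g * beta) ^ k"
      using gb gpos beta_pos by (simp add: power_le_one)
    have "g ^ m * (1 - (1 - g * beta) ^ k) \<le> c ^ m * (1 - (1 - c * beta) ^ k)"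
      using gmc pw a0 cpos by (intro mult_mono) auto
    hence le: "S g * g ^ i \<le> S c * c ^ i" unfolding e1 e2 using beta_pos
      by (simp add: divide_right_mono)
    have "(1 - c * beta) * (S g * g ^ i) \<le> (1 - c * beta) * (S c * c ^ i)"
      using le cb by (intro mult_left_mono) auto
    hence "((1 - c * beta) * (S g * g ^ i) + c ^ i) * alpha \<le> ((1 - c * beta) * (S c * c ^ i) + c ^ i) * alpha"
      using alpha_pos by (simp add: mult_right_mono)
    thus ?thesis unfolding PsiK PsiK1 mx c_def[symmetric] by (simp add: algebra_simps)
  qed
qed

end
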